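(* Let $r\ge1$. The constructions $(Q,E)\mapsto X_{(Q,E)}$ and $X\mapsto(Q_X,E_X)$ (defined in the context) give a one-to-one correspondence, up to isomorphism, between $r$-VASSes and $\mathcal V_r$-presheaves $X$ that are finitely generated and have no double edges, i.e. such that for all $\mathsf u\in\mathbb Z^r$ and distinct $e_1,e_2\in X[(\mathsf u,\mathsf 0)]$ one has $X[(\sigma_{\mathsf u},\iota_{\mathsf 0}^{\mathsf 0})](e_1)\ne X[(\sigma_{\mathsf u},\iota_{\mathsf 0}^{\mathsf 0})](e_2)$ or $X[(\tau_{\mathsf u},\iota_{\mathsf 0}^{\mathsf 0})](e_1)\ne X[(\tau_{\mathsf u},\iota_{\mathsf 0}^{\mathsf 0})](e_2)$. That is, $(Q_{X_{(Q,E)}},E_{X_{(Q,E)}})$ is isomorphic to $(Q,E)$ for every $r$-VASS, and $X\cong X_{(Q_X,E_X)}$ for every such presheaf $X$.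
   Context: An $r$-VASS is a pair $(Q,E)$ with $Q$ a finite set and $E\subseteq Q\times\mathbb Z^r\times Q$ finite; write $e=(\mathrm{src}(e),\mathrm{vec}(e),\mathrm{tgt}(e))$. For an alphabet $\Sigma$ not containing the symbol $\emptyset$, $\mathcal G(\Sigma)$ is the category with objects $\{\emptyset\}\cup\Sigma$, only identity endomorphisms, $\mathcal G(\emptyset,a)=\{\sigma_a,\tau_a\}$ and $\mathcal G(a,\emptyset)=\emptyset$ for $a\in\Sigma$, and no morphisms between distinct letters. For a set $A$, $\mathcal F(A)$ is the category with object set $A$ and exactly one morphism $\iota_a^b:a\to b$ for all $a,b\in A$. $\mathcal V_r$ is the category $\mathcal G(\mathbb Z^r)\times\mathcal F(\mathbb N^r)$ (with d-structure: formorphisms the identities and the $(\sigma_{\mathsf u},\iota^{\mathsf v}_{\mathsf u^-+\mathsf v}):(\emptyset,\mathsf u^-+\mathsf v)\to(\mathsf u,\mathsf v)$, backmorphisms the identities and $(\tau_{\mathsf u},\iota^{\mathsf v}_{\mathsf u^++\mathsf v}):(\emptyset,\mathsf u^++\mathsf v)\to(\mathsf u,\mathsf v)$, where $\mathsf u=\mathsf u^+-\mathsf u^-$ with $\mathsf u^\pm\in\mathbb N^r$ the positive and negative parts). A $\mathcal V_r$-presheaf is a functor $X:\mathcal V_r^{op}\to\mathbf{Set}$; it is finitely generated if $X\cong\operatorname{colim}_{e\in\mathcal E}\mathcal V_r(-,G(e))$ for some finite category $\mathcal E$ and functor $G:\mathcal E\to\mathcal V_r$. For an $r$-VASS $(Q,E)$,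 $X_{(Q,E)}$ is given by $X[(\emptyset,\mathsf v)]=Q\times\{\mathsf v\}$, $X[(\mathsf u,\mathsf v)]=\{(e,\mathsf v)\mid e\in E,\mathrm{vec}(e)=\mathsf u\}$, $X[(\mathrm{id}_\emptyset,\iota_{\mathsf w}^{\mathsf v})](q,\mathsf v)=(q,\mathsf w)$, $X[(\mathrm{id}_{\mathsf u},\iota_{\mathsf w}^{\mathsf v})](e,\mathsf v)=(e,\mathsf w)$, $X[(\sigma_{\mathsf u},\iota_{\mathsf w}^{\mathsf v})](e,\mathsf v)=(\mathrm{src}(e),\mathsf w)$, $X[(\tau_{\mathsf u},\iota_{\mathsf w}^{\mathsf v})](e,\mathsf v)=(\mathrm{tgt}(e),\mathsf w)$. For a $\mathcal V_r$-presheaf $X$, $Q_X=X[(\emptyset,\mathsf 0)]$ and $E_X=\bigcup_{\mathsf u\in\mathbb Z^r}\{(X[(\sigma_{\mathsf u},\iota_{\mathsf 0}^{\mathsf 0})](e),\mathsf u,X[(\tau_{\mathsf u},\iota_{\mathsf 0}^{\mathsf 0})](e))\mid e\in X[(\mathsf u,\mathsf 0)]\}$. *)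

theory Defs
  imports Main
begin

section \<open>The category V_r = G(Z^r) x F(N^r)\<close>

text \<open>Elements of Z^r are int lists of length r, elements of N^r nat lists of length r.
  An object of G(Z^r) is None (the symbol emptyset) or Some u.  Morphisms of G(Z^r): identities GId o, and sigma_u, tau_u : emptyset -> u.
  The unique morphism iota_a^b : a -> b of F(N^r) is represented by the pair (a, b).\<close>

datatype gmor = GId "int list option" | Sig "int list" | Tau "int list"

type_synonym vobj = "int list option \<times> nat list"
type_synonym vmor = "gmor \<times> (nat list \<times> nat list)"

fun gdom :: "gmor \<Rightarrow> int list option" where
  "gdom (GId o') = o'" | "gdom (Sig u) = None" | "gdom (Tau u) = None"

fun gcod :: "gmor \<Rightarrow> int list option" where
  "gcod (GId o') = o'" | "gcod (Sig u) = Some u" | "gcod (Tau u) = Some u"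

text \<open>composition g o f (f first); only meaningful when cod f = dom g\<close>
fun gcomp :: "gmor \<Rightarrow> gmor \<Rightarrow> gmor" where
  "gcomp (GId x) f = f"
| "gcomp g (GId x) = g"
| "gcomp g f = undefined"

definition vdom :: "vmor \<Rightarrow> vobj" where
  "vdom f = (gdom (fst f), fst (snd f))"

definition vcod :: "vmor \<Rightarrow> vobj" where
  "vcod f = (gcod (fst f), snd (snd f))"

definition vcomp :: "vmor \<Rightarrow> vmor \<Rightarrow> vmor" where
  "vcomp g f = (gcomp (fst g) (fst f), (fst (snd f), snd (snd g)))"

definition vid :: "vobj \<Rightarrow> vmor" where
  "vid c = (GId (fst c), (snd c, snd c))"

definition is_vobj :: "nat \<Rightarrow> vobj \<Rightarrow> bool" where
  "is_vobj r c \<longleftrightarrow> length (snd c) = r \<and> (\<forall>u. fst c = Some u \<longrightarrow> length u = r)"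

definition is_vmor :: "nat \<Rightarrow> vmor \<Rightarrow> bool" where
  "is_vmor r f \<longleftrightarrow> is_vobj r (vdom f) \<and> is_vobj r (vcod f)"

definition vhom :: "nat \<Rightarrow> vobj \<Rightarrow> vobj \<Rightarrow> vmor set" where
  "vhom r c d = {f. is_vmor r f \<and> vdom f = c \<and> vcod f = d}"

text \<open>A presheaf X : V_r^op -> Set is given by its object part Xo and its action Xm:
  for f : c -> d, Xm f maps Xo d to Xo c.\<close>

definition is_presheaf :: "nat \<Rightarrow> (vobj \<Rightarrow> 'x set) \<Rightarrow> (vmor \<Rightarrow> 'x \<Rightarrow> 'x) \<Rightarrow> bool" where
  "is_presheaf r Xo Xm \<longleftrightarrow>
     (\<forall>f. is_vmor r f \<longrightarrow> Xm f ` Xo (vcod f) \<subseteq> Xo (vdom f)) \<and>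
     (\<forall>c. is_vobj r c \<longrightarrow> (\<forall>x\<in>Xo c. Xm (vid c) x = x)) \<and>
     (\<forall>f g. is_vmor r f \<and> is_vmor r g \<and> vcod f = vdom g \<longrightarrow>
        (\<forall>x\<in>Xo (vcod g). Xm (vcomp g f) x = Xm f (Xm g x)))"

definition presheaf_iso :: "nat \<Rightarrow> (vobj \<Rightarrow> 'x set) \<Rightarrow> (vmor \<Rightarrow> 'x \<Rightarrow> 'x)
    \<Rightarrow> (vobj \<Rightarrow> 'y set) \<Rightarrow> (vmor \<Rightarrow> 'y \<Rightarrow> 'y) \<Rightarrow> bool" where
  "presheaf_iso r Xo Xm Yo Ym \<longleftrightarrow>
     (\<exists>\<phi> :: vobj \<Rightarrow> 'x \<Rightarrow> 'y.
        (\<forall>c. is_vobj r c \<longrightarrow> bij_betw (\<phi> c) (Xo c) (Yo c)) \<and>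
        (\<forall>f. is_vmor r f \<longrightarrow> (\<forall>x\<in>Xo (vcod f). \<phi> (vdom f) (Xm f x) = Ym f (\<phi> (vcod f) x))))"

text \<open>A finite category (objects and morphisms coded as natural numbers; every finite
  category is isomorphic to one of this form).\<close>
record fcat =
  cOb :: "nat set"
  cMor :: "nat set"
  cdom :: "nat \<Rightarrow> nat"
  ccod :: "nat \<Rightarrow> nat"
  cid :: "nat \<Rightarrow> nat"
  ccomp :: "nat \<Rightarrow> nat \<Rightarrow> nat"

definition is_fin_cat :: "fcat \<Rightarrow> bool" where
  "is_fin_cat C \<longleftrightarrow>
     finite (cOb C) \<and> finite (cMor C) \<and>
     (\<forall>m\<in>cMor C. cdom C m \<in> cOb C \<and> ccod C m \<in> cOb C) \<and>
     (\<forall>a\<in>cOb C. cid C a \<in> cMor C \<and> cdom C (cid C a) = a \<and> ccod C (cid C a) = a) \<and>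
     (\<forall>f\<in>cMor C. \<forall>g\<in>cMor C. ccod C f = cdom C g \<longrightarrow>
        ccomp C g f \<in> cMor C \<and> cdom C (ccomp C g f) = cdom C f \<and> ccod C (ccomp C g f) = ccod C g) \<and>
     (\<forall>f\<in>cMor C. ccomp C (cid C (ccod C f)) f = f \<and> ccomp C f (cid C (cdom C f)) = f) \<and>
     (\<forall>f\<in>cMor C. \<forall>g\<in>cMor C. \<forall>h\<in>cMor C. ccod C f = cdom C g \<and> ccod C g = cdom C h \<longrightarrow>
        ccomp C h (ccomp C g f) = ccomp C (ccomp C h g) f)"

definition is_functor_to_V :: "nat \<Rightarrow> fcat \<Rightarrow> (nat \<Rightarrow> vobj) \<Rightarrow> (nat \<Rightarrow> vmor) \<Rightarrow> bool" where
  "is_functor_to_V r C Go Gm \<longleftrightarrow>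
     (\<forall>a\<in>cOb C. is_vobj r (Go a)) \<and>
     (\<forall>m\<in>cMor C. Gm m \<in> vhom r (Go (cdom C m)) (Go (ccod C m))) \<and>
     (\<forall>a\<in>cOb C. Gm (cid C a) = vid (Go a)) \<and>
     (\<forall>f\<in>cMor C. \<forall>g\<in>cMor C. ccod C f = cdom C g \<longrightarrow>
        Gm (ccomp C g f) = vcomp (Gm g) (Gm f))"

text \<open>The colimit of the representables V_r(-, G e), computed pointwise as in Set:
  at c it is the disjoint union of the V_r(c, G e) modulo the equivalence relation
  generated by (e, f) ~ (e', G(alpha) o f) for alpha : e -> e'.\<close>
definition colim_step :: "nat \<Rightarrow> fcat \<Rightarrow> (nat \<Rightarrow> vobj) \<Rightarrow> (nat \<Rightarrow> vmor)
    \<Rightarrow> ((nat \<times> vmor) \<times> (nat \<times> vmor)) set" where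
  "colim_step r C Go Gm = {((cdom C \<alpha>, f), (ccod C \<alpha>, vcomp (Gm \<alpha>) f)) | \<alpha> f.
      \<alpha> \<in> cMor C \<and> is_vmor r f \<and> vcod f = Go (cdom C \<alpha>)}"

definition colim_rel :: "nat \<Rightarrow> fcat \<Rightarrow> (nat \<Rightarrow> vobj) \<Rightarrow> (nat \<Rightarrow> vmor)
    \<Rightarrow> ((nat \<times> vmor) \<times> (nat \<times> vmor)) set" where
  "colim_rel r C Go Gm = (colim_step r C Go Gm \<union> (colim_step r C Go Gm)\<inverse>)\<^sup>*"

definition colim_o :: "nat \<Rightarrow> fcat \<Rightarrow> (nat \<Rightarrow> vobj) \<Rightarrow> (nat \<Rightarrow> vmor)
    \<Rightarrow> vobj \<Rightarrow> (nat \<times> vmor) set set" where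
  "colim_o r C Go Gm c = (SIGMA e:cOb C. vhom r c (Go e)) // colim_rel r C Go Gm"

definition colim_m :: "nat \<Rightarrow> fcat \<Rightarrow> (nat \<Rightarrow> vobj) \<Rightarrow> (nat \<Rightarrow> vmor)
    \<Rightarrow> vmor \<Rightarrow> (nat \<times> vmor) set \<Rightarrow> (nat \<times> vmor) set" where
  "colim_m r C Go Gm h K = colim_rel r C Go Gm `` ((\<lambda>(e, f). (e, vcomp f h)) ` K)"

definition fin_gen :: "nat \<Rightarrow> (vobj \<Rightarrow> 'x set) \<Rightarrow> (vmor \<Rightarrow> 'x \<Rightarrow> 'x) \<Rightarrow> bool" where
  "fin_gen r Xo Xm \<longleftrightarrow>
     (\<exists>C Go Gm. is_fin_cat C \<and> is_functor_to_V r C Go Gm \<and>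
        presheaf_iso r Xo Xm (colim_o r C Go Gm) (colim_m r C Go Gm))"

definition zero_vec :: "nat \<Rightarrow> nat list" where
  "zero_vec r = replicate r 0"

definition no_double_edges :: "nat \<Rightarrow> (vobj \<Rightarrow> 'x set) \<Rightarrow> (vmor \<Rightarrow> 'x \<Rightarrow> 'x) \<Rightarrow> bool" where
  "no_double_edges r Xo Xm \<longleftrightarrow>
     (\<forall>u. length u = r \<longrightarrow>
        (\<forall>e1\<in>Xo (Some u, zero_vec r). \<forall>e2\<in>Xo (Some u, zero_vec r). e1 \<noteq> e2 \<longrightarrow>
           Xm (Sig u, (zero_vec r, zero_vec r)) e1 \<noteq> Xm (Sig u, (zero_vec r, zero_vec r)) e2 \<or>
           Xm (Tau u, (zero_vec r, zero_vec r)) e1 \<noteq> Xm (Tau u, (zero_vec r, zero_vec r)) e2))"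

definition is_vass :: "nat \<Rightarrow> 'q set \<Rightarrow> ('q \<times> int list \<times> 'q) set \<Rightarrow> bool" where
  "is_vass r Q E \<longleftrightarrow> finite Q \<and> finite E \<and> E \<subseteq> Q \<times> {u. length u = r} \<times> Q"

definition vass_iso :: "'p set \<Rightarrow> ('p \<times> int list \<times> 'p) set \<Rightarrow> 'q set \<Rightarrow> ('q \<times> int list \<times> 'q) set \<Rightarrow> bool" where
  "vass_iso Q E Q' E' \<longleftrightarrow>
     (\<exists>h. bij_betw h Q Q' \<and> E' = (\<lambda>(p, u, q). (h p, u, h q)) ` E)"

text \<open>The presheaf X_(Q,E); elements (Inl q, v) and (Inr e, v).\<close>
fun vass_o :: "'q set \<Rightarrow> ('q \<times> int list \<times> 'q) set \<Rightarrow> vobj \<Rightarrow> (('q + ('q \<times> int list \<times> 'q)) \<times> nat list) set" where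
  "vass_o Q E (None, v) = (\<lambda>q. (Inl q, v)) ` Q"
| "vass_o Q E (Some u, v) = (\<lambda>e. (Inr e, v)) ` {e \<in> E. fst (snd e) = u}"

definition vass_m :: "vmor \<Rightarrow> ('q + ('q \<times> int list \<times> 'q)) \<times> nat list \<Rightarrow> ('q + ('q \<times> int list \<times> 'q)) \<times> nat list" where
  "vass_m f x = (let w = fst (snd f) in
     (case fst f of
        GId _ \<Rightarrow> (fst x, w)
      | Sig _ \<Rightarrow> (case fst x of Inr (p, u, q) \<Rightarrow> (Inl p, w) | Inl q \<Rightarrow> undefined)
      | Tau _ \<Rightarrow> (case fst x of Inr (p, u, q) \<Rightarrow> (Inl q, w) | Inl q \<Rightarrow> undefined)))"

definition pQ :: "nat \<Rightarrow> (vobj \<Rightarrow> 'x set) \<Rightarrow> (vmor \<Rightarrow> 'x \<Rightarrow> 'x) \<Rightarrow> 'x set" where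
  "pQ r Xo Xm = Xo (None, zero_vec r)"

definition pE :: "nat \<Rightarrow> (vobj \<Rightarrow> 'x set) \<Rightarrow> (vmor \<Rightarrow> 'x \<Rightarrow> 'x) \<Rightarrow> ('x \<times> int list \<times> 'x) set" where
  "pE r Xo Xm = (\<Union>u\<in>{u. length u = r}.
     (\<lambda>e. (Xm (Sig u, (zero_vec r, zero_vec r)) e, u, Xm (Tau u, (zero_vec r, zero_vec r)) e))
       ` Xo (Some u, zero_vec r))"

end

theory Submission
  imports Defs
begin


lemma gcomp_dom: "gcod f = gdom g \<Longrightarrow> gdom (gcomp g f) = gdom f"
  by (cases g; cases f) auto
lemma gcomp_cod: "gcod f = gdom g \<Longrightarrow> gcod (gcomp g f) = gcod g"
  by (cases g; cases f) auto

lemma vcomp_dom: "vcod f = vdom g \<Longrightarrow> vdom (vcomp g f) = vdom f"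
  by (auto simp: vdom_def vcod_def vcomp_def gcomp_dom)
lemma vcomp_cod: "vcod f = vdom g \<Longrightarrow> vcod (vcomp g f) = vcod g"
  by (auto simp: vdom_def vcod_def vcomp_def gcomp_cod)
lemma vcomp_vmor: "is_vmor r f \<Longrightarrow> is_vmor r g \<Longrightarrow> vcod f = vdom g \<Longrightarrow> is_vmor r (vcomp g f)"
  by (simp add: is_vmor_def vcomp_dom vcomp_cod)
lemma vcomp_vhom: "f \<in> vhom r a b \<Longrightarrow> g \<in> vhom r b c \<Longrightarrow> vcomp g f \<in> vhom r a c"
  by (auto simp: vhom_def vcomp_dom vcomp_cod vcomp_vmor)

lemma psh_map: "is_presheaf r Xo Xm \<Longrightarrow> is_vmor r f \<Longrightarrow> x \<in> Xo (vcod f) \<Longrightarrow> Xm f x \<in> Xo (vdom f)"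
  unfolding is_presheaf_def by blast
lemma psh_comp: "is_presheaf r Xo Xm \<Longrightarrow> is_vmor r f \<Longrightarrow> is_vmor r g \<Longrightarrow> vcod f = vdom g \<Longrightarrow> x \<in> Xo (vcod g)
   \<Longrightarrow> Xm (vcomp g f) x = Xm f (Xm g x)"
  unfolding is_presheaf_def by blast
lemma psh_id: "is_presheaf r Xo Xm \<Longrightarrow> is_vobj r c \<Longrightarrow> x \<in> Xo c \<Longrightarrow> Xm (vid c) x = x"
  unfolding is_presheaf_def by blast

lemmas vdefs = vdom_def vcod_def vcomp_def vid_def is_vmor_def is_vobj_def zero_vec_def

lemma psh_transport:
  assumes P: "is_presheaf r Xo Xm" and "length v = r" "length w = r" "\<forall>u. o' = Some u \<longrightarrow> length u = r"
  shows "bij_betw (Xm (GId o', (w, v))) (Xo (o', v)) (Xo (o', w))"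
proof (rule bij_betw_byWitness[where f' = "Xm (GId o', (v, w))"])
  have A: "Xm (GId o', (a, b)) (Xm (GId o', (b, a)) x) = x" if "x \<in> Xo (o', a)" "length a = r" "length b = r" for a b x
  proof -
    have "Xm (vcomp (GId o', (b, a)) (GId o', (a, b))) x = Xm (GId o', (a, b)) (Xm (GId o', (b, a)) x)"
      by (rule psh_comp[OF P]) (use that assms in \<open>auto simp: vdefs\<close>)
    moreover have "vcomp (GId o', (b, a)) (GId o', (a, b)) = vid (o', a)" by (simp add: vdefs)
    moreover have "Xm (vid (o', a)) x = x" by (rule psh_id[OF P]) (use that assms in \<open>auto simp: vdefs\<close>)
    ultimately show ?thesis by simp
  qed
  show "\<forall>a\<in>Xo (o', v). Xm (GId o', (v, w)) (Xm (GId o', (w, v)) a) = a" using A assms by blast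
  show "\<forall>a\<in>Xo (o', w). Xm (GId o', (w, v)) (Xm (GId o', (v, w)) a) = a" using A assms by blast
  show "Xm (GId o', (w, v)) ` Xo (o', v) \<subseteq> Xo (o', w)"
    using psh_map[OF P, of "(GId o', (w, v))"] assms by (auto simp: vdefs)
  show "Xm (GId o', (v, w)) ` Xo (o', w) \<subseteq> Xo (o', v)"
    using psh_map[OF P, of "(GId o', (v, w))"] assms by (auto simp: vdefs)
qed

lemma vhom_finite: "finite (vhom r c d)"
proof -
  have "vhom r c d \<subseteq> (\<lambda>g. (g, (snd c, snd d))) ` ({GId (fst c)} \<union> (case fst d of Some u \<Rightarrow> {Sig u, Tau u} | None \<Rightarrow> {}))"
  proof
    fix f assume "f \<in> vhom r c d"
    then obtain g a b where f: "f = (g, (a, b))" and "gdom g = fst c" "a = snd c" "gcod g = fst d" "b = snd d"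
      by (cases f) (auto simp: vhom_def vdom_def vcod_def)
    then show "f \<in> (\<lambda>g. (g, (snd c, snd d))) ` ({GId (fst c)} \<union> (case fst d of Some u \<Rightarrow> {Sig u, Tau u} | None \<Rightarrow> {}))"
      by (cases g) (auto dest: sym)
  qed
  moreover have "finite ({GId (fst c)} \<union> (case fst d of Some u \<Rightarrow> {Sig u, Tau u} | None \<Rightarrow> {}))"
    by (cases "fst d") auto
  ultimately show ?thesis by (meson finite_imageI finite_subset)
qed

lemma colim_finite: "is_fin_cat C \<Longrightarrow> finite (colim_o r C Go Gm c)"
  unfolding colim_o_def quotient_def is_fin_cat_def
  by (intro finite_UN_I finite_SigmaI vhom_finite) simp_all

lemma colim_nonempty: "colim_o r C Go Gm (Some u, v) \<noteq> {} \<Longrightarrow> \<exists>e\<in>cOb C. fst (Go e) = Some u"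
proof -
  assume "colim_o r C Go Gm (Some u, v) \<noteq> {}"
  then obtain e f where "e \<in> cOb C" "f \<in> vhom r (Some u, v) (Go e)"
    unfolding colim_o_def quotient_def by blast
  then obtain g a b where "f = (g, (a, b))" "gdom g = Some u" "gcod g = fst (Go e)"
    by (cases f) (auto simp: vhom_def vdom_def vcod_def dest: sym[of _ "Go e"])
  then show ?thesis using \<open>e \<in> cOb C\<close> by (cases g) auto
qed

lemma fin_gen_props:
  assumes "fin_gen r Xo Xm"
  shows "is_vobj r c \<Longrightarrow> finite (Xo c)"
    and "finite {u. length u = r \<and> Xo (Some u, zero_vec r) \<noteq> {}}"
proof -
  obtain C Go Gm \<phi> where C: "is_fin_cat C" and B: "\<And>c. is_vobj r c \<Longrightarrow> bij_betw (\<phi> c) (Xo c) (colim_o r C Go Gm c)"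
    using assms unfolding fin_gen_def presheaf_iso_def by blast
  show "is_vobj r c \<Longrightarrow> finite (Xo c)"
    using B colim_finite[OF C] bij_betw_finite by blast
  have "{u. length u = r \<and> Xo (Some u, zero_vec r) \<noteq> {}} \<subseteq> Some -` ((fst \<circ> Go) ` cOb C)"
  proof
    fix u assume u: "u \<in> {u. length u = r \<and> Xo (Some u, zero_vec r) \<noteq> {}}"
    have "bij_betw (\<phi> (Some u, zero_vec r)) (Xo (Some u, zero_vec r)) (colim_o r C Go Gm (Some u, zero_vec r))"
      using u by (intro B) (simp add: is_vobj_def zero_vec_def)
    then have "colim_o r C Go Gm (Some u, zero_vec r) \<noteq> {}"
      using u unfolding bij_betw_def by blast
    then obtain e where "e \<in> cOb C" "fst (Go e) = Some u" using colim_nonempty by blast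
    then show "u \<in> Some -` ((fst \<circ> Go) ` cOb C)" by (metis comp_apply image_eqI vimage_eq)
  qed
  moreover have "finite (Some -` ((fst \<circ> Go) ` cOb C))"
    using C by (intro finite_vimageI) (auto simp: is_fin_cat_def)
  ultimately show "finite {u. length u = r \<and> Xo (Some u, zero_vec r) \<noteq> {}}" by (rule finite_subset)
qed

lemma part2_vass:
  assumes P: "is_presheaf r Xo Xm" and F: "fin_gen r Xo Xm"
  shows "is_vass r (pQ r Xo Xm) (pE r Xo Xm)"
proof -
  let ?z = "zero_vec r"
  have fQ: "finite (pQ r Xo Xm)" unfolding pQ_def
    by (rule fin_gen_props(1)[OF F]) (simp add: is_vobj_def zero_vec_def)
  have eq: "pE r Xo Xm = (\<Union>u\<in>{u. length u = r \<and> Xo (Some u, ?z) \<noteq> {}}.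
     (\<lambda>e. (Xm (Sig u, (?z, ?z)) e, u, Xm (Tau u, (?z, ?z)) e)) ` Xo (Some u, ?z))"
    unfolding pE_def by auto
  have fE: "finite (pE r Xo Xm)" unfolding eq
    using fin_gen_props[OF F] by (intro finite_UN_I finite_imageI) (auto simp: is_vobj_def zero_vec_def)
  have sub: "pE r Xo Xm \<subseteq> pQ r Xo Xm \<times> {u. length u = r} \<times> pQ r Xo Xm"
  proof
    fix t assume "t \<in> pE r Xo Xm"
    then obtain u e where u: "length u = r" and e: "e \<in> Xo (Some u, ?z)"
      and t: "t = (Xm (Sig u, (?z, ?z)) e, u, Xm (Tau u, (?z, ?z)) e)"
      unfolding pE_def by blast
    have "Xm (Sig u, (?z, ?z)) e \<in> Xo (vdom (Sig u, (?z, ?z)))"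
      by (rule psh_map[OF P]) (use u e in \<open>auto simp: vdefs\<close>)
    moreover have "Xm (Tau u, (?z, ?z)) e \<in> Xo (vdom (Tau u, (?z, ?z)))"
      by (rule psh_map[OF P]) (use u e in \<open>auto simp: vdefs\<close>)
    ultimately show "t \<in> pQ r Xo Xm \<times> {u. length u = r} \<times> pQ r Xo Xm"
      using t u by (simp add: pQ_def vdom_def)
  qed
  show ?thesis using fQ fE sub by (simp add: is_vass_def)
qed

definition phi2 :: "nat \<Rightarrow> (vmor \<Rightarrow> 'x \<Rightarrow> 'x) \<Rightarrow> vobj \<Rightarrow> 'x \<Rightarrow> ('x + ('x \<times> int list \<times> 'x)) \<times> nat list" where
  "phi2 r Xm c x = (case fst c of
     None \<Rightarrow> (Inl (Xm (GId None, (zero_vec r, snd c)) x), snd c)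
   | Some u \<Rightarrow> (Inr (Xm (Sig u, (zero_vec r, zero_vec r)) (Xm (GId (Some u), (zero_vec r, snd c)) x), u,
                     Xm (Tau u, (zero_vec r, zero_vec r)) (Xm (GId (Some u), (zero_vec r, snd c)) x)), snd c))"

lemma part2_iso:
  assumes P: "is_presheaf r Xo Xm" and N: "no_double_edges r Xo Xm"
  shows "presheaf_iso r Xo Xm (vass_o (pQ r Xo Xm) (pE r Xo Xm)) vass_m"
  unfolding presheaf_iso_def
proof (intro exI[of _ "phi2 r Xm"] conjI allI impI ballI)
  let ?z = "zero_vec r"
  fix c assume c: "is_vobj r c"
  obtain o' v where cv: "c = (o', v)" by (cases c)
  show "bij_betw (phi2 r Xm c) (Xo c) (vass_o (pQ r Xo Xm) (pE r Xo Xm) c)"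
  proof (cases o')
    case None
    have b1: "bij_betw (Xm (GId None, (?z, v))) (Xo (None, v)) (Xo (None, ?z))"
      by (rule psh_transport[OF P]) (use c cv in \<open>auto simp: vdefs\<close>)
    have b2: "bij_betw (\<lambda>q. (Inl q, v)) (Xo (None, ?z)) ((\<lambda>q. (Inl q, v)) ` Xo (None, ?z))"
      by (rule bij_betw_imageI) (auto simp: inj_on_def)
    have "bij_betw ((\<lambda>q. (Inl q, v)) \<circ> Xm (GId None, (?z, v))) (Xo (None, v)) ((\<lambda>q. (Inl q, v)) ` Xo (None, ?z))"
      by (rule bij_betw_trans[OF b1 b2])
    then show ?thesis using None cv by (simp add: phi2_def[abs_def] pQ_def comp_def)
  next
    case (Some u)
    have u: "length u = r" using c cv Some by (simp add: is_vobj_def)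
    have b1: "bij_betw (Xm (GId (Some u), (?z, v))) (Xo (Some u, v)) (Xo (Some u, ?z))"
      by (rule psh_transport[OF P]) (use c cv Some in \<open>auto simp: vdefs\<close>)
    let ?ed = "\<lambda>e. (Xm (Sig u, (?z, ?z)) e, u, Xm (Tau u, (?z, ?z)) e)"
    have b2: "bij_betw ?ed (Xo (Some u, ?z)) {e \<in> pE r Xo Xm. fst (snd e) = u}"
      unfolding bij_betw_def
    proof
      show "inj_on ?ed (Xo (Some u, ?z))"
      proof (rule inj_onI)
        fix a b assume a: "a \<in> Xo (Some u, ?z)" and b: "b \<in> Xo (Some u, ?z)" and ab: "?ed a = ?ed b"
        show "a = b"
        proof (rule ccontr)
          assume "a \<noteq> b"
          then have "Xm (Sig u, (?z, ?z)) a \<noteq> Xm (Sig u, (?z, ?z)) b \<or> Xm (Tau u, (?z, ?z)) a \<noteq> Xm (Tau u, (?z, ?z)) b"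
            using N u a b unfolding no_double_edges_def by blast
          then show False using ab by simp
        qed
      qed
      show "?ed ` Xo (Some u, ?z) = {e \<in> pE r Xo Xm. fst (snd e) = u}"
      proof
        show "?ed ` Xo (Some u, ?z) \<subseteq> {e \<in> pE r Xo Xm. fst (snd e) = u}"
        proof
          fix t assume "t \<in> ?ed ` Xo (Some u, ?z)"
          then obtain y where y: "y \<in> Xo (Some u, ?z)" and t: "t = ?ed y" by blast
          have "t \<in> pE r Xo Xm" unfolding pE_def using u y t by (intro UN_I[of u]) auto
          then show "t \<in> {e \<in> pE r Xo Xm. fst (snd e) = u}" using t by simp
        qed
        show "{e \<in> pE r Xo Xm. fst (snd e) = u} \<subseteq> ?ed ` Xo (Some u, ?z)"
        proof
          fix t assume "t \<in> {e \<in> pE r Xo Xm. fst (snd e) = u}"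
          then obtain u' y where "y \<in> Xo (Some u', ?z)" "t = (Xm (Sig u', (?z, ?z)) y, u', Xm (Tau u', (?z, ?z)) y)" "fst (snd t) = u"
            unfolding pE_def by blast
          then show "t \<in> ?ed ` Xo (Some u, ?z)" by auto
        qed
      qed
    qed
    have b3: "bij_betw (\<lambda>e. (Inr e, v)) {e \<in> pE r Xo Xm. fst (snd e) = u} ((\<lambda>e. (Inr e, v)) ` {e \<in> pE r Xo Xm. fst (snd e) = u})"
      by (rule bij_betw_imageI) (auto simp: inj_on_def)
    have "bij_betw ((\<lambda>e. (Inr e, v)) \<circ> (?ed \<circ> Xm (GId (Some u), (?z, v)))) (Xo (Some u, v))
       ((\<lambda>e. (Inr e, v)) ` {e \<in> pE r Xo Xm. fst (snd e) = u})"
      by (rule bij_betw_trans[OF bij_betw_trans[OF b1 b2] b3])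
    then show ?thesis using Some cv by (simp add: phi2_def[abs_def] comp_def)
  qed
next
  let ?z = "zero_vec r"
  fix f x assume f: "is_vmor r f" and x: "x \<in> Xo (vcod f)"
  obtain g w v where fd: "f = (g, (w, v))" by (cases f) auto
  have lw: "length w = r" "length v = r" using f fd by (auto simp: vdefs)
  show "phi2 r Xm (vdom f) (Xm f x) = vass_m f (phi2 r Xm (vcod f) x)"
  proof (cases g)
    case (GId o')
    have C1: "Xm (vcomp f (GId o', (?z, w))) x = Xm (GId o', (?z, w)) (Xm f x)"
      by (rule psh_comp[OF P]) (use f fd x GId lw in \<open>auto simp: vdefs\<close>)
    have C2: "vcomp f (GId o', (?z, w)) = (GId o', (?z, v))" using fd GId by (simp add: vdefs)
    show ?thesis using C1 C2 fd GId by (cases o') (auto simp: phi2_def vass_m_def vdom_def vcod_def)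
  next
    case (Sig u)
    have u: "length u = r" using f fd Sig by (auto simp: vdefs)
    have C1: "Xm (vcomp f (GId None, (?z, w))) x = Xm (GId None, (?z, w)) (Xm f x)"
      by (rule psh_comp[OF P]) (use f fd x Sig lw in \<open>auto simp: vdefs\<close>)
    have C2: "vcomp f (GId None, (?z, w)) = (Sig u, (?z, v))" using fd Sig by (simp add: vdefs)
    have C3: "Xm (vcomp (GId (Some u), (?z, v)) (Sig u, (?z, ?z))) x = Xm (Sig u, (?z, ?z)) (Xm (GId (Some u), (?z, v)) x)"
      by (rule psh_comp[OF P]) (use f fd x Sig lw u in \<open>auto simp: vdefs\<close>)
    have C4: "vcomp (GId (Some u), (?z, v)) (Sig u, (?z, ?z)) = (Sig u, (?z, v))" by (simp add: vdefs)
    show ?thesis using C1 C2 C3 C4 fd Sig by (auto simp: phi2_def vass_m_def vdom_def vcod_def)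
  next
    case (Tau u)
    have u: "length u = r" using f fd Tau by (auto simp: vdefs)
    have C1: "Xm (vcomp f (GId None, (?z, w))) x = Xm (GId None, (?z, w)) (Xm f x)"
      by (rule psh_comp[OF P]) (use f fd x Tau lw in \<open>auto simp: vdefs\<close>)
    have C2: "vcomp f (GId None, (?z, w)) = (Tau u, (?z, v))" using fd Tau by (simp add: vdefs)
    have C3: "Xm (vcomp (GId (Some u), (?z, v)) (Tau u, (?z, ?z))) x = Xm (Tau u, (?z, ?z)) (Xm (GId (Some u), (?z, v)) x)"
      by (rule psh_comp[OF P]) (use f fd x Tau lw u in \<open>auto simp: vdefs\<close>)
    have C4: "vcomp (GId (Some u), (?z, v)) (Tau u, (?z, ?z)) = (Tau u, (?z, v))" by (simp add: vdefs)
    show ?thesis using C1 C2 C3 C4 fd Tau by (auto simp: phi2_def vass_m_def vdom_def vcod_def)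
  qed
qed




lemma vcomp_vid_left: "vcod f = d \<Longrightarrow> vcomp (vid d) f = f"
  by (cases f) (auto simp: vdefs)

lemma gcod_None: "gcod g = None \<Longrightarrow> g = GId None"
  by (cases g) auto

lemma vass_presheaf:
  assumes V: "is_vass r Q E"
  shows "is_presheaf r (vass_o Q E) vass_m"
  unfolding is_presheaf_def
proof (intro conjI allI impI ballI)
  have EQ: "\<And>p u q. (p, u, q) \<in> E \<Longrightarrow> p \<in> Q \<and> q \<in> Q" using V by (auto simp: is_vass_def)
  fix f assume "is_vmor r f"
  obtain g a b where f: "f = (g, (a, b))" by (cases f) auto
  show "vass_m f ` vass_o Q E (vcod f) \<subseteq> vass_o Q E (vdom f)"
  proof (cases g)
    case (GId o') then show ?thesis using f by (cases o') (auto simp: vass_m_def vdom_def vcod_def)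
  next
    case (Sig u)
    show ?thesis
    proof
      fix y assume "y \<in> vass_m f ` vass_o Q E (vcod f)"
      then obtain x where x: "x \<in> vass_o Q E (Some u, b)" and y: "y = vass_m f x"
        using f Sig by (auto simp: vcod_def)
      from x obtain p u' q where e: "(p, u', q) \<in> E" "x = (Inr (p, u', q), b)" by auto
      have "y = (Inl p, a)" using y e f Sig by (simp add: vass_m_def)
      then show "y \<in> vass_o Q E (vdom f)" using EQ[OF e(1)] f Sig by (simp add: vdom_def)
    qed
  next
    case (Tau u)
    show ?thesis
    proof
      fix y assume "y \<in> vass_m f ` vass_o Q E (vcod f)"
      then obtain x where x: "x \<in> vass_o Q E (Some u, b)" and y: "y = vass_m f x"
        using f Tau by (auto simp: vcod_def)
      from x obtain p u' q where e: "(p, u', q) \<in> E" "x = (Inr (p, u', q), b)" by auto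
      have "y = (Inl q, a)" using y e f Tau by (simp add: vass_m_def)
      then show "y \<in> vass_o Q E (vdom f)" using EQ[OF e(1)] f Tau by (simp add: vdom_def)
    qed
  qed
next
  fix c x assume "is_vobj r c" "x \<in> vass_o Q E c"
  then show "vass_m (vid c) x = x"
    by (cases c; cases "fst c") (auto simp: vass_m_def vid_def)
next
  fix f g x assume fg: "is_vmor r f \<and> is_vmor r g \<and> vcod f = vdom g" and x: "x \<in> vass_o Q E (vcod g)"
  obtain gf a b where f: "f = (gf, (a, b))" by (cases f) auto
  obtain gg a' b' where g: "g = (gg, (a', b'))" by (cases g) auto
  have m: "gcod gf = gdom gg" "b = a'" using fg f g by (auto simp: vdom_def vcod_def)
  show "vass_m (vcomp g f) x = vass_m f (vass_m g x)"
  proof (cases gg)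
    case (GId o')
    then show ?thesis using f g m x by (cases gf; cases o') (auto simp: vass_m_def vcomp_def vcod_def)
  next
    case (Sig u)
    then have "gf = GId None" using m by (cases gf) auto
    then show ?thesis using f g m x Sig by (auto simp: vass_m_def vcomp_def vcod_def)
  next
    case (Tau u)
    then have "gf = GId None" using m by (cases gf) auto
    then show ?thesis using f g m x Tau by (auto simp: vass_m_def vcomp_def vcod_def)
  qed
qed

lemma vass_nde:
  assumes V: "is_vass r Q E"
  shows "no_double_edges r (vass_o Q E) vass_m"
proof (unfold no_double_edges_def, intro allI impI ballI)
  fix u e1 e2 assume e1: "e1 \<in> vass_o Q E (Some u, zero_vec r)" and e2: "e2 \<in> vass_o Q E (Some u, zero_vec r)"
    and ne: "e1 \<noteq> e2"
  from e1 obtain p1 q1 where a: "e1 = (Inr (p1, u, q1), zero_vec r)" by auto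
  from e2 obtain p2 q2 where b: "e2 = (Inr (p2, u, q2), zero_vec r)" by auto
  show "vass_m (Sig u, zero_vec r, zero_vec r) e1 \<noteq> vass_m (Sig u, zero_vec r, zero_vec r) e2 \<or>
       vass_m (Tau u, zero_vec r, zero_vec r) e1 \<noteq> vass_m (Tau u, zero_vec r, zero_vec r) e2"
    using a b ne by (simp add: vass_m_def)
qed

lemma vass_vass_iso:
  assumes V: "is_vass r Q E"
  shows "vass_iso (pQ r (vass_o Q E) vass_m) (pE r (vass_o Q E) vass_m) Q E"
  unfolding vass_iso_def
proof (intro exI[of _ "\<lambda>x. case fst x of Inl q \<Rightarrow> q"] conjI)
  show "bij_betw (\<lambda>x. case fst x of Inl q \<Rightarrow> q) (pQ r (vass_o Q E) vass_m) Q"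
    unfolding pQ_def by (rule bij_betw_byWitness[where f'="\<lambda>q. (Inl q, zero_vec r)"]) auto
  have EQ: "\<And>p u q. (p, u, q) \<in> E \<Longrightarrow> p \<in> Q \<and> q \<in> Q \<and> length u = r" using V by (auto simp: is_vass_def)
  have "pE r (vass_o Q E) vass_m = (\<lambda>(p, u, q). ((Inl p, zero_vec r), u, (Inl q, zero_vec r))) ` E" (is "?L = ?R")
  proof
    show "?L \<subseteq> ?R"
    proof
      fix t assume "t \<in> pE r (vass_o Q E) vass_m"
      then obtain u y where y: "y \<in> vass_o Q E (Some u, zero_vec r)"
        and t: "t = (vass_m (Sig u, (zero_vec r, zero_vec r)) y, u, vass_m (Tau u, (zero_vec r, zero_vec r)) y)"
        unfolding pE_def by blast
      from y obtain p q where e: "(p, u, q) \<in> E" "y = (Inr (p, u, q), zero_vec r)" by auto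
      have "t = (\<lambda>(p, u, q). ((Inl p, zero_vec r), u, (Inl q, zero_vec r))) (p, u, q)"
        using t e by (simp add: vass_m_def)
      then show "t \<in> (\<lambda>(p, u, q). ((Inl p, zero_vec r), u, (Inl q, zero_vec r))) ` E" using e by blast
    qed
    show "?R \<subseteq> ?L"
    proof
      fix t assume "t \<in> ?R"
      then obtain p u q where e: "(p, u, q) \<in> E" and t: "t = ((Inl p, zero_vec r), u, (Inl q, zero_vec r))" by auto
      have y: "(Inr (p, u, q), zero_vec r) \<in> vass_o Q E (Some u, zero_vec r)" using e by simp
      have "t = (vass_m (Sig u, (zero_vec r, zero_vec r)) (Inr (p, u, q), zero_vec r), u,
                 vass_m (Tau u, (zero_vec r, zero_vec r)) (Inr (p, u, q), zero_vec r))"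
        using t by (simp add: vass_m_def)
      then show "t \<in> pE r (vass_o Q E) vass_m" unfolding pE_def using y EQ[OF e] by blast
    qed
  qed
  then show "E = (\<lambda>(p, u, q). (case fst p of Inl q \<Rightarrow> q, u, case fst q of Inl q \<Rightarrow> q)) ` pE r (vass_o Q E) vass_m"
    by (simp add: image_image split_def)
qed




locale vctx =
  fixes r :: nat and Q :: "'q set" and E :: "('q \<times> int list \<times> 'q) set"
    and fQ :: "'q \<Rightarrow> nat" and fE :: "'q \<times> int list \<times> 'q \<Rightarrow> nat"
  assumes V: "is_vass r Q E" and iQ: "inj_on fQ Q" and iE: "inj_on fE E"
begin

definition oQ where "oQ q = 2 * fQ q"
definition oE where "oE e = Suc (2 * fE e)"
definition mid :: "nat \<Rightarrow> nat" where "mid a = 3 * a"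
definition msig :: "nat \<Rightarrow> nat" where "msig a = 3 * a + 1"
definition mtau :: "nat \<Rightarrow> nat" where "mtau a = 3 * a + 2"
definition obQ where "obQ = oQ ` Q"
definition obE where "obE = oE ` E"
definition edc where "edc a = the_inv_into E fE (a div 2)"
definition stc where "stc a = the_inv_into Q fQ (a div 2)"

definition CC :: fcat where
  "CC = \<lparr>cOb = obQ \<union> obE,
         cMor = mid ` (obQ \<union> obE) \<union> msig ` obE \<union> mtau ` obE,
         cdom = (\<lambda>m. if m mod 3 = 0 then m div 3 else if m mod 3 = 1 then oQ (fst (edc (m div 3)))
                     else oQ (snd (snd (edc (m div 3))))),
         ccod = (\<lambda>m. m div 3),
         cid = mid,
         ccomp = (\<lambda>g f. if g mod 3 = 0 then f else g)\<rparr>"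

definition Go :: "nat \<Rightarrow> vobj" where
  "Go a = (if even a then (None, zero_vec r) else (Some (fst (snd (edc a))), zero_vec r))"

definition Gm :: "nat \<Rightarrow> vmor" where
  "Gm m = (if m mod 3 = 0 then vid (Go (m div 3))
           else if m mod 3 = 1 then (Sig (fst (snd (edc (m div 3)))), (zero_vec r, zero_vec r))
           else (Tau (fst (snd (edc (m div 3)))), (zero_vec r, zero_vec r)))"

lemma EQ: "(p, u, q) \<in> E \<Longrightarrow> p \<in> Q \<and> q \<in> Q \<and> length u = r"
  using V by (auto simp: is_vass_def)

lemma edc_E[simp]: "e \<in> E \<Longrightarrow> edc (oE e) = e"
  unfolding edc_def oE_def using the_inv_into_f_f[OF iE] by simp
lemma stc_Q[simp]: "q \<in> Q \<Longrightarrow> stc (oQ q) = q"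
  unfolding stc_def oQ_def using the_inv_into_f_f[OF iQ] by simp
lemma par[simp]: "even (oQ q)" "odd (oE e)" by (simp_all add: oQ_def oE_def)
lemma oQE[simp]: "oQ q \<noteq> oE e" "oE e \<noteq> oQ q" by (simp_all add: oQ_def oE_def; presburger)+
lemma oQ_inj[simp]: "q \<in> Q \<Longrightarrow> q' \<in> Q \<Longrightarrow> oQ q = oQ q' \<longleftrightarrow> q = q'"
  using iQ by (auto simp: oQ_def inj_on_def)
lemma oE_inj[simp]: "e \<in> E \<Longrightarrow> e' \<in> E \<Longrightarrow> oE e = oE e' \<longleftrightarrow> e = e'"
  using iE by (auto simp: oE_def inj_on_def)

lemma ar[simp]: "mid a mod 3 = 0" "mid a div 3 = a"
   "msig a mod 3 = 1" "msig a div 3 = a"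
   "mtau a mod 3 = 2" "mtau a div 3 = a"
  by (simp_all add: mid_def msig_def mtau_def) presburger+

lemma mor_cases:
  assumes "m \<in> cMor CC"
  obtains (id) a where "a \<in> cOb CC" "m = mid a"
  | (sig) e where "e \<in> E" "m = msig (oE e)"
  | (tau) e where "e \<in> E" "m = mtau (oE e)"
  using assms unfolding CC_def obE_def by auto

lemma CC_simps[simp]:
  "cOb CC = obQ \<union> obE"
  "cdom CC (mid a) = a" "ccod CC m = m div 3" "cid CC a = mid a"
  "ccomp CC g f = (if g mod 3 = 0 then f else g)"
  by (simp_all add: CC_def)

lemma CC_sig[simp]: "e \<in> E \<Longrightarrow> cdom CC (msig (oE e)) = oQ (fst e)"
  by (simp add: CC_def)
lemma CC_tau[simp]: "e \<in> E \<Longrightarrow> cdom CC (mtau (oE e)) = oQ (snd (snd e))"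
  by (simp add: CC_def)

lemma e_ends: "e \<in> E \<Longrightarrow> fst e \<in> Q \<and> snd (snd e) \<in> Q \<and> length (fst (snd e)) = r"
  using EQ[of "fst e" "fst (snd e)" "snd (snd e)"] by simp

lemma fin_QE: "finite Q" "finite E" using V by (auto simp: is_vass_def)

lemma fincat: "is_fin_cat CC"
  unfolding is_fin_cat_def
proof (intro conjI ballI impI)
  show "finite (cOb CC)" using fin_QE by (simp add: obQ_def obE_def)
  show "finite (cMor CC)" using fin_QE by (simp add: CC_def obQ_def obE_def)
  fix m assume m: "m \<in> cMor CC"
  show "cdom CC m \<in> cOb CC" using m
    by (cases rule: mor_cases) (auto simp: obQ_def obE_def dest: e_ends)
  show "ccod CC m \<in> cOb CC" using m
    by (cases rule: mor_cases) (auto simp: obE_def)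
next
  fix a assume "a \<in> cOb CC"
  then show "cid CC a \<in> cMor CC" "cdom CC (cid CC a) = a" "ccod CC (cid CC a) = a"
    by (auto simp: CC_def)
next
  fix f g assume f: "f \<in> cMor CC" and g: "g \<in> cMor CC" and fg: "ccod CC f = cdom CC g"
  have "ccomp CC g f \<in> cMor CC \<and> cdom CC (ccomp CC g f) = cdom CC f \<and> ccod CC (ccomp CC g f) = ccod CC g"
    using g
  proof (cases rule: mor_cases)
    case (id a)
    then show ?thesis using f fg by simp
  next
    case (sig e)
    from f show ?thesis
    proof (cases rule: mor_cases)
      case (id b)
      then show ?thesis using g sig fg by simp
    next
      case (sig e')
      then show ?thesis using fg \<open>g = _\<close> \<open>e \<in> E\<close> by simp
    next
      case (tau e')
      then show ?thesis using fg \<open>g = _\<close> \<open>e \<in> E\<close> by simp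
    qed
  next
    case (tau e)
    from f show ?thesis
    proof (cases rule: mor_cases)
      case (id b)
      then show ?thesis using g tau fg by simp
    next
      case (sig e')
      then show ?thesis using fg \<open>g = _\<close> \<open>e \<in> E\<close> by simp
    next
      case (tau e')
      then show ?thesis using fg \<open>g = _\<close> \<open>e \<in> E\<close> by simp
    qed
  qed
  then show "ccomp CC g f \<in> cMor CC" "cdom CC (ccomp CC g f) = cdom CC f" "ccod CC (ccomp CC g f) = ccod CC g"
    by auto
next
  fix f assume f: "f \<in> cMor CC"
  show "ccomp CC (cid CC (ccod CC f)) f = f" by simp
  show "ccomp CC f (cid CC (cdom CC f)) = f" using f
    by (cases rule: mor_cases) auto
next
  fix f g h assume "f \<in> cMor CC" "g \<in> cMor CC" "h \<in> cMor CC"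
  show "ccomp CC h (ccomp CC g f) = ccomp CC (ccomp CC h g) f" by simp
qed

end



lemma step_sigma:
  assumes C: "is_fin_cat C" and G: "is_functor_to_V r C Go Gm" and st: "(s, t) \<in> colim_step r C Go Gm"
  shows "s \<in> Sigma (cOb C) (\<lambda>e. vhom r c (Go e)) \<longleftrightarrow> t \<in> Sigma (cOb C) (\<lambda>e. vhom r c (Go e))"
proof -
  obtain \<alpha> f where a: "\<alpha> \<in> cMor C" and f: "is_vmor r f" "vcod f = Go (cdom C \<alpha>)"
    and s: "s = (cdom C \<alpha>, f)" and t: "t = (ccod C \<alpha>, vcomp (Gm \<alpha>) f)"
    using st unfolding colim_step_def by blast
  have ob: "cdom C \<alpha> \<in> cOb C" "ccod C \<alpha> \<in> cOb C" using C a unfolding is_fin_cat_def by auto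
  have Ga: "Gm \<alpha> \<in> vhom r (Go (cdom C \<alpha>)) (Go (ccod C \<alpha>))" using G a unfolding is_functor_to_V_def by blast
  then have Ga': "is_vmor r (Gm \<alpha>)" "vdom (Gm \<alpha>) = Go (cdom C \<alpha>)" "vcod (Gm \<alpha>) = Go (ccod C \<alpha>)"
    by (auto simp: vhom_def)
  have "vdom (vcomp (Gm \<alpha>) f) = vdom f" using f Ga' by (intro vcomp_dom) simp
  moreover have "vcod (vcomp (Gm \<alpha>) f) = Go (ccod C \<alpha>)" using f Ga' vcomp_cod by simp
  moreover have "is_vmor r (vcomp (Gm \<alpha>) f)" using f Ga' by (intro vcomp_vmor) auto
  ultimately show ?thesis using s t ob f by (auto simp: vhom_def)
qed

lemma R_sym: "(s, t) \<in> colim_rel r C Go Gm \<Longrightarrow> (t, s) \<in> colim_rel r C Go Gm"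
proof -
  assume "(s, t) \<in> colim_rel r C Go Gm"
  then have "(t, s) \<in> ((colim_step r C Go Gm \<union> (colim_step r C Go Gm)\<inverse>)\<inverse>)\<^sup>*"
    unfolding colim_rel_def by (rule rtrancl_converseI)
  moreover have "(colim_step r C Go Gm \<union> (colim_step r C Go Gm)\<inverse>)\<inverse> = colim_step r C Go Gm \<union> (colim_step r C Go Gm)\<inverse>"
    by auto
  ultimately show ?thesis unfolding colim_rel_def by simp
qed

lemma R_trans: "(s, t) \<in> colim_rel r C Go Gm \<Longrightarrow> (t, u) \<in> colim_rel r C Go Gm \<Longrightarrow> (s, u) \<in> colim_rel r C Go Gm"
  unfolding colim_rel_def by (rule rtrancl_trans)

lemma R_refl: "(s, s) \<in> colim_rel r C Go Gm"
  unfolding colim_rel_def by simp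

lemma R_class: "(s, t) \<in> colim_rel r C Go Gm \<Longrightarrow> colim_rel r C Go Gm `` {s} = colim_rel r C Go Gm `` {t}"
  using R_sym R_trans by blast

lemma R_step: "\<alpha> \<in> cMor C \<Longrightarrow> is_vmor r f \<Longrightarrow> vcod f = Go (cdom C \<alpha>) \<Longrightarrow>
   ((cdom C \<alpha>, f), (ccod C \<alpha>, vcomp (Gm \<alpha>) f)) \<in> colim_rel r C Go Gm"
  unfolding colim_rel_def colim_step_def by (rule r_into_rtrancl) blast

lemma R_sigma:
  assumes C: "is_fin_cat C" and G: "is_functor_to_V r C Go Gm"
  shows "(s, t) \<in> colim_rel r C Go Gm \<Longrightarrow> s \<in> Sigma (cOb C) (\<lambda>e. vhom r c (Go e)) \<Longrightarrow> t \<in> Sigma (cOb C) (\<lambda>e. vhom r c (Go e))"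
  unfolding colim_rel_def
proof (induction rule: rtrancl_induct)
  case (step y z)
  then show ?case using step_sigma[OF C G, of y z c] step_sigma[OF C G, of z y c] by blast
qed simp




context vctx begin

lemma Go_simps[simp]: "Go (oQ q) = (None, zero_vec r)" "Go (oE e) = (Some (fst (snd (edc (oE e)))), zero_vec r)"
  by (simp_all add: Go_def)

lemma Gm_simps[simp]: "Gm (mid a) = vid (Go a)"
  "Gm (msig a) = (Sig (fst (snd (edc a))), (zero_vec r, zero_vec r))"
  "Gm (mtau a) = (Tau (fst (snd (edc a))), (zero_vec r, zero_vec r))"
  by (simp_all add: Gm_def)

lemma ob_cases:
  assumes "a \<in> cOb CC"
  obtains (st) q where "q \<in> Q" "a = oQ q" | (ed) e where "e \<in> E" "a = oE e"
  using assms by (auto simp: obQ_def obE_def)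

lemma vid_vhom: "is_vobj r c \<Longrightarrow> vid c \<in> vhom r c c"
  by (cases c) (auto simp: vhom_def vdefs)

lemma Go_vobj: "a \<in> cOb CC \<Longrightarrow> is_vobj r (Go a)"
  by (cases rule: ob_cases) (auto simp: is_vobj_def zero_vec_def dest: EQ)

lemma Gm_vhom: "m \<in> cMor CC \<Longrightarrow> Gm m \<in> vhom r (Go (cdom CC m)) (Go (ccod CC m))"
proof -
  assume m: "m \<in> cMor CC"
  show "Gm m \<in> vhom r (Go (cdom CC m)) (Go (ccod CC m))" using m
  proof (cases rule: mor_cases)
    case (id a) then show ?thesis using Go_vobj vid_vhom by simp
  next
    case (sig e) then show ?thesis using e_ends[OF sig(1)] by (auto simp: vhom_def vdefs)
  next
    case (tau e) then show ?thesis using e_ends[OF tau(1)] by (auto simp: vhom_def vdefs)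
  qed
qed

lemma vfunctor: "is_functor_to_V r CC Go Gm"
  unfolding is_functor_to_V_def
proof (intro conjI ballI impI)
  fix a assume "a \<in> cOb CC" then show "is_vobj r (Go a)" by (rule Go_vobj)
next
  fix m assume m: "m \<in> cMor CC"
  then show "Gm m \<in> vhom r (Go (cdom CC m)) (Go (ccod CC m))" by (rule Gm_vhom)
next
  fix a assume "a \<in> cOb CC" then show "Gm (cid CC a) = vid (Go a)" by simp
next
  fix f g assume f: "f \<in> cMor CC" and g: "g \<in> cMor CC" and fg: "ccod CC f = cdom CC g"
  have fh: "Gm f \<in> vhom r (Go (cdom CC f)) (Go (ccod CC f))" using f by (rule Gm_vhom)
  show "Gm (ccomp CC g f) = vcomp (Gm g) (Gm f)" using g
  proof (cases rule: mor_cases)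
    case (id a)
    then show ?thesis using fh fg by (simp add: vcomp_vid_left vhom_def)
  next
    case (sig e)
    from f have "f = mid (oQ (fst e))"
    proof (cases rule: mor_cases)
      case (id b) then show ?thesis using fg sig by simp
    next
      case (sig e') then show ?thesis using fg \<open>g = msig (oE e)\<close> \<open>e \<in> E\<close> by (simp; metis par)
    next
      case (tau e') then show ?thesis using fg \<open>g = msig (oE e)\<close> \<open>e \<in> E\<close> by (simp; metis par)
    qed
    then show ?thesis using sig by (simp add: vdefs)
  next
    case (tau e)
    from f have "f = mid (oQ (snd (snd e)))"
    proof (cases rule: mor_cases)
      case (id b) then show ?thesis using fg tau by simp
    next
      case (sig e') then show ?thesis using fg \<open>g = mtau (oE e)\<close> \<open>e \<in> E\<close> by (simp; metis par)
    next
      case (tau e') then show ?thesis using fg \<open>g = mtau (oE e)\<close> \<open>e \<in> E\<close> by (simp; metis par)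
    qed
    then show ?thesis using tau by (simp add: vdefs)
  qed
qed

end



context vctx begin

definition gen where "gen a = (if even a then (Inl (stc a), zero_vec r) else (Inr (edc a), zero_vec r))"
definition psi where "psi s = vass_m (snd s) (gen (fst s))"
definition rep where "rep x = (case fst x of Inl q \<Rightarrow> (oQ q, (GId None, (snd x, zero_vec r)))
    | Inr e \<Rightarrow> (oE e, (GId (Some (fst (snd e))), (snd x, zero_vec r))))"

lemma gen_simps[simp]: "q \<in> Q \<Longrightarrow> gen (oQ q) = (Inl q, zero_vec r)" "e \<in> E \<Longrightarrow> gen (oE e) = (Inr e, zero_vec r)"
  by (simp_all add: gen_def)

lemma gen_in: "a \<in> cOb CC \<Longrightarrow> gen a \<in> vass_o Q E (Go a)"
  by (cases rule: ob_cases) auto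

lemma psi_step: "(s, t) \<in> colim_step r CC Go Gm \<Longrightarrow> psi s = psi t"
proof -
  assume "(s, t) \<in> colim_step r CC Go Gm"
  then obtain \<alpha> f where a: "\<alpha> \<in> cMor CC" and f: "is_vmor r f" "vcod f = Go (cdom CC \<alpha>)"
    and s: "s = (cdom CC \<alpha>, f)" and t: "t = (ccod CC \<alpha>, vcomp (Gm \<alpha>) f)"
    unfolding colim_step_def by blast
  obtain g w b where fd: "f = (g, (w, b))" by (cases f) auto
  from a show ?thesis
  proof (cases rule: mor_cases)
    case (id a) then show ?thesis using s t f by (simp add: vcomp_vid_left)
  next
    case (sig e)
    obtain p u q where e: "e = (p, u, q)" by (cases e)
    have "p \<in> Q" using EQ sig e by blast
    have "g = GId None" "b = zero_vec r" using f fd sig e by (auto simp: vcod_def intro: gcod_None)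
    then show ?thesis using s t sig e fd \<open>p \<in> Q\<close> by (simp add: psi_def vass_m_def vdefs)
  next
    case (tau e)
    obtain p u q where e: "e = (p, u, q)" by (cases e)
    have "q \<in> Q" using EQ tau e by blast
    have "g = GId None" "b = zero_vec r" using f fd tau e by (auto simp: vcod_def intro: gcod_None)
    then show ?thesis using s t tau e fd \<open>q \<in> Q\<close> by (simp add: psi_def vass_m_def vdefs)
  qed
qed

lemma psi_R: "(s, t) \<in> colim_rel r CC Go Gm \<Longrightarrow> psi s = psi t"
  unfolding colim_rel_def
proof (induction rule: rtrancl_induct)
  case (step y z)
  then show ?case using psi_step[of y z] psi_step[of z y] by auto
qed simp


lemma main:
  assumes sS: "s \<in> Sigma (cOb CC) (\<lambda>e. vhom r c (Go e))"
  shows "psi s \<in> vass_o Q E c \<and> (s, rep (psi s)) \<in> colim_rel r CC Go Gm"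
proof -
  obtain a f where s: "s = (a, f)" and a: "a \<in> cOb CC" and f: "f \<in> vhom r c (Go a)"
    using sS by blast
  obtain g w b where fd: "f = (g, (w, b))" by (cases f) auto
  have fv: "is_vmor r f" "vdom f = c" "vcod f = Go a" using f by (auto simp: vhom_def)
  have lw: "length w = r" using fv fd by (auto simp: vdefs)
  from a show ?thesis
  proof (cases rule: ob_cases)
    case (st q)
    have "g = GId None" "b = zero_vec r" using fv fd st by (auto simp: vcod_def intro: gcod_None)
    then show ?thesis using s st fd fv by (auto simp: psi_def vass_m_def rep_def vdom_def R_refl)
  next
    case (ed e)
    obtain p u q where e: "e = (p, u, q)" by (cases e)
    have pq: "p \<in> Q" "q \<in> Q" "length u = r" using EQ ed e by blast+
    have gc: "gcod g = Some u" "b = zero_vec r" using fv fd ed e by (auto simp: vcod_def)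
    show ?thesis
    proof (cases g)
      case (GId o')
      then show ?thesis using s ed e fd fv gc by (auto simp: psi_def vass_m_def rep_def vdom_def R_refl)
    next
      case (Sig u')
      have u': "u' = u" using gc Sig by simp
      have c: "c = (None, w)" using fv fd Sig by (simp add: vdom_def)
      have ps: "psi s = (Inl p, w)" using s ed e fd Sig by (simp add: psi_def vass_m_def)
      have step: "((cdom CC (msig (oE e)), (GId None, (w, zero_vec r))),
                   (ccod CC (msig (oE e)), vcomp (Gm (msig (oE e))) (GId None, (w, zero_vec r)))) \<in> colim_rel r CC Go Gm"
        by (rule R_step) (use ed e lw in \<open>auto simp: CC_def obE_def vdefs\<close>)
      have "(rep (psi s), s) \<in> colim_rel r CC Go Gm"
        using step ps s ed e fd Sig u' gc by (simp add: rep_def vdefs)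
      then show ?thesis using R_sym ps c pq by auto
    next
      case (Tau u')
      have u': "u' = u" using gc Tau by simp
      have c: "c = (None, w)" using fv fd Tau by (simp add: vdom_def)
      have ps: "psi s = (Inl q, w)" using s ed e fd Tau by (simp add: psi_def vass_m_def)
      have step: "((cdom CC (mtau (oE e)), (GId None, (w, zero_vec r))),
                   (ccod CC (mtau (oE e)), vcomp (Gm (mtau (oE e))) (GId None, (w, zero_vec r)))) \<in> colim_rel r CC Go Gm"
        by (rule R_step) (use ed e lw in \<open>auto simp: CC_def obE_def vdefs\<close>)
      have "(rep (psi s), s) \<in> colim_rel r CC Go Gm"
        using step ps s ed e fd Tau u' gc by (simp add: rep_def vdefs)
      then show ?thesis using R_sym ps c pq by auto
    qed
  qed
qed

lemma rep_in:
  assumes c: "is_vobj r c" and x: "x \<in> vass_o Q E c"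
  shows "rep x \<in> Sigma (cOb CC) (\<lambda>e. vhom r c (Go e)) \<and> psi (rep x) = x"
proof -
  obtain o' v where cv: "c = (o', v)" by (cases c)
  show ?thesis
  proof (cases o')
    case None
    then obtain q where q: "q \<in> Q" "x = (Inl q, v)" using x cv by auto
    then show ?thesis using c cv None
      by (auto simp: rep_def psi_def vass_m_def obQ_def vhom_def vdefs)
  next
    case (Some u)
    then obtain e where e: "e \<in> E" "fst (snd e) = u" "x = (Inr e, v)" using x cv by auto
    then show ?thesis using c cv Some
      by (auto simp: rep_def psi_def vass_m_def obE_def vhom_def vdefs)
  qed
qed


lemma colim_iso: "presheaf_iso r (vass_o Q E) vass_m (colim_o r CC Go Gm) (colim_m r CC Go Gm)"
  unfolding presheaf_iso_def
proof (intro exI[of _ "\<lambda>c x. colim_rel r CC Go Gm `` {rep x}"] conjI allI impI ballI)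
  let ?R = "colim_rel r CC Go Gm"
  fix c assume c: "is_vobj r c"
  show "bij_betw (\<lambda>x. ?R `` {rep x}) (vass_o Q E c) (colim_o r CC Go Gm c)"
    unfolding bij_betw_def
  proof
    show "inj_on (\<lambda>x. ?R `` {rep x}) (vass_o Q E c)"
    proof (rule inj_onI)
      fix x y assume x: "x \<in> vass_o Q E c" and y: "y \<in> vass_o Q E c" and eq: "?R `` {rep x} = ?R `` {rep y}"
      have "rep y \<in> ?R `` {rep y}" using R_refl by blast
      then have "(rep x, rep y) \<in> ?R" using eq by blast
      then have "psi (rep x) = psi (rep y)" by (rule psi_R)
      then show "x = y" using rep_in[OF c x] rep_in[OF c y] by simp
    qed
    show "(\<lambda>x. ?R `` {rep x}) ` vass_o Q E c = colim_o r CC Go Gm c"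
    proof
      show "(\<lambda>x. ?R `` {rep x}) ` vass_o Q E c \<subseteq> colim_o r CC Go Gm c"
        unfolding colim_o_def using rep_in[OF c] by (auto intro: quotientI)
      show "colim_o r CC Go Gm c \<subseteq> (\<lambda>x. ?R `` {rep x}) ` vass_o Q E c"
      proof
        fix K assume "K \<in> colim_o r CC Go Gm c"
        then obtain s where K: "K = ?R `` {s}" and s: "s \<in> Sigma (cOb CC) (\<lambda>e. vhom r c (Go e))"
          unfolding colim_o_def by (auto elim: quotientE)
        have "psi s \<in> vass_o Q E c" "(s, rep (psi s)) \<in> ?R" using main[OF s] by auto
        then show "K \<in> (\<lambda>x. ?R `` {rep x}) ` vass_o Q E c" using K R_class by blast
      qed
    qed
  qed
next
  let ?R = "colim_rel r CC Go Gm"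
  fix h x assume h: "is_vmor r h" and x: "x \<in> vass_o Q E (vcod h)"
  let ?sh = "\<lambda>(e, f). (e, vcomp f h)"
  have P: "is_presheaf r (vass_o Q E) vass_m" using V by (rule vass_presheaf)
  have cv: "is_vobj r (vcod h)" "is_vobj r (vdom h)" using h by (auto simp: is_vmor_def)
  have rx: "rep x \<in> Sigma (cOb CC) (\<lambda>e. vhom r (vcod h) (Go e))" "psi (rep x) = x"
    using rep_in[OF cv(1) x] by auto
  have hx: "vass_m h x \<in> vass_o Q E (vdom h)" using psh_map[OF P h x] .
  have K: "(?sh s, rep (vass_m h x)) \<in> ?R" if "s \<in> ?R `` {rep x}" for s
  proof -
    have sR: "(rep x, s) \<in> ?R" using that by blast
    have sS: "s \<in> Sigma (cOb CC) (\<lambda>e. vhom r (vcod h) (Go e))"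
      using R_sigma[OF fincat vfunctor sR rx(1)] .
    have ps: "psi s = x" using psi_R[OF sR] rx(2) by simp
    obtain a f where s: "s = (a, f)" and a: "a \<in> cOb CC" and f: "f \<in> vhom r (vcod h) (Go a)" using sS by blast
    have hh: "h \<in> vhom r (vdom h) (vcod h)" using h by (simp add: vhom_def)
    have sh: "?sh s \<in> Sigma (cOb CC) (\<lambda>e. vhom r (vdom h) (Go e))"
      using s a vcomp_vhom[OF hh f] by simp
    have fv: "is_vmor r f" "vdom f = vcod h" "vcod f = Go a" using f by (auto simp: vhom_def)
    have "psi (?sh s) = vass_m (vcomp f h) (gen a)" using s by (simp add: psi_def)
    also have "\<dots> = vass_m h (vass_m f (gen a))"
      by (rule psh_comp[OF P h fv(1)]) (use fv gen_in[OF a] in auto)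
    also have "vass_m f (gen a) = x" using ps s by (simp add: psi_def)
    finally have "psi (?sh s) = vass_m h x" .
    then show ?thesis using main[OF sh] by simp
  qed
  show "?R `` {rep (vass_m h x)} = colim_m r CC Go Gm h (?R `` {rep x})"
    unfolding colim_m_def
  proof
    show "?R `` {rep (vass_m h x)} \<subseteq> ?R `` (?sh ` (?R `` {rep x}))"
    proof
      fix y assume y: "y \<in> ?R `` {rep (vass_m h x)}"
      have r0: "rep x \<in> ?R `` {rep x}" using R_refl by blast
      have "(?sh (rep x), y) \<in> ?R" using K[OF r0] y R_trans by blast
      then show "y \<in> ?R `` (?sh ` (?R `` {rep x}))" using r0 by blast
    qed
    show "?R `` (?sh ` (?R `` {rep x})) \<subseteq> ?R `` {rep (vass_m h x)}"
    proof
      fix y assume "y \<in> ?R `` (?sh ` (?R `` {rep x}))"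
      then obtain s where s: "s \<in> ?R `` {rep x}" and y: "(?sh s, y) \<in> ?R" by blast
      have "(rep (vass_m h x), ?sh s) \<in> ?R" using K[OF s] R_sym by blast
      then show "y \<in> ?R `` {rep (vass_m h x)}" using y R_trans by blast
    qed
  qed
qed

lemma vass_fin_gen: "fin_gen r (vass_o Q E) vass_m"
  unfolding fin_gen_def using fincat vfunctor colim_iso by blast

end

lemma vass_fin_gen_ex:
  assumes V: "is_vass r Q E"
  shows "fin_gen r (vass_o Q E) vass_m"
proof -
  have fin: "finite Q" "finite E" using V by (auto simp: is_vass_def)
  obtain fQ :: "'a \<Rightarrow> nat" where iQ: "inj_on fQ Q" using finite_imp_inj_to_nat_seg[OF fin(1)] by blast
  obtain fE :: "'a \<times> int list \<times> 'a \<Rightarrow> nat" where iE: "inj_on fE E" using finite_imp_inj_to_nat_seg[OF fin(2)] by blast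
  interpret vctx r Q E fQ fE using V iQ iE by unfold_locales
  show ?thesis by (rule vass_fin_gen)
qed



theorem proposition15:
  fixes r :: nat
  assumes "r \<ge> 1"
  shows "(\<forall>(Q :: 'q set) E. is_vass r Q E \<longrightarrow>
            is_presheaf r (vass_o Q E) vass_m \<and> fin_gen r (vass_o Q E) vass_m \<and>
            no_double_edges r (vass_o Q E) vass_m \<and>
            vass_iso (pQ r (vass_o Q E) vass_m) (pE r (vass_o Q E) vass_m) Q E) \<and>
         (\<forall>(Xo :: vobj \<Rightarrow> 'x set) Xm. is_presheaf r Xo Xm \<and> fin_gen r Xo Xm \<and> no_double_edges r Xo Xm \<longrightarrow>
            is_vass r (pQ r Xo Xm) (pE r Xo Xm) \<and>
            presheaf_iso r Xo Xm (vass_o (pQ r Xo Xm) (pE r Xo Xm)) vass_m)"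
proof (intro conjI allI impI)
  fix Q :: "'q set" and E assume V: "is_vass r Q E"
  show "is_presheaf r (vass_o Q E) vass_m" using V by (rule vass_presheaf)
  show "fin_gen r (vass_o Q E) vass_m" using V by (rule vass_fin_gen_ex)
  show "no_double_edges r (vass_o Q E) vass_m" using V by (rule vass_nde)
  show "vass_iso (pQ r (vass_o Q E) vass_m) (pE r (vass_o Q E) vass_m) Q E" using V by (rule vass_vass_iso)
next
  fix Xo :: "vobj \<Rightarrow> 'x set" and Xm
  assume H: "is_presheaf r Xo Xm \<and> fin_gen r Xo Xm \<and> no_double_edges r Xo Xm"
  show "is_vass r (pQ r Xo Xm) (pE r Xo Xm)" using H part2_vass by blast
  show "presheaf_iso r Xo Xm (vass_o (pQ r Xo Xm) (pE r Xo Xm)) vass_m" using H part2_iso by blast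
qed

end
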